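(* The variety $\mathsf{V}(S_{(4,398)})$ is the ai-semiring variety defined by the identities $xy\approx yx$, $xy\approx xy+x$, $x^2+yz\approx x^2yz$, $xyz\approx xy+yz+xz$.
   Context: An ai-semiring is an algebra $(S,+,\cdot)$ with $(S,+)$ a semilattice, $(S,\cdot)$ a semigroup, and both distributive laws. $\mathsf{V}(S)$ is the variety generated by $S$; "the ai-semiring variety defined by identities $\Sigma$" is the class of all ai-semirings satisfying $\Sigma$. $S_{(4,398)}$ has carrier $\{1,2,3,4\}$; addition: $x+x=x$, $2+x=x$, $1+x=1$ for all $x$, $3+4=1$; multiplication (row $a$, column $b$ gives $a\cdot b$): row $1$: $1,1,1,1$; row $2$: $1,2,1,4$; row $3$: $1,1,1,1$; row $4$: $1,4,1,1$. *)

theory Defs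
  imports Main
begin

datatype trm = Var nat | Plus trm trm | Times trm trm

fun eval :: "('a \<Rightarrow> 'a \<Rightarrow> 'a) \<Rightarrow> ('a \<Rightarrow> 'a \<Rightarrow> 'a) \<Rightarrow> (nat \<Rightarrow> 'a) \<Rightarrow> trm \<Rightarrow> 'a" where
  "eval ad mu \<rho> (Var i) = \<rho> i"
| "eval ad mu \<rho> (Plus s t) = ad (eval ad mu \<rho> s) (eval ad mu \<rho> t)"
| "eval ad mu \<rho> (Times s t) = mu (eval ad mu \<rho> s) (eval ad mu \<rho> t)"

definition holds_in :: "'a set \<Rightarrow> ('a \<Rightarrow> 'a \<Rightarrow> 'a) \<Rightarrow> ('a \<Rightarrow> 'a \<Rightarrow> 'a) \<Rightarrow> trm \<Rightarrow> trm \<Rightarrow> bool" where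
  "holds_in A ad mu u v \<longleftrightarrow> (\<forall>\<rho>. (\<forall>i. \<rho> i \<in> A) \<longrightarrow> eval ad mu \<rho> u = eval ad mu \<rho> v)"

definition ai_semiring :: "('a \<Rightarrow> 'a \<Rightarrow> 'a) \<Rightarrow> ('a \<Rightarrow> 'a \<Rightarrow> 'a) \<Rightarrow> bool" where
  "ai_semiring ad mu \<longleftrightarrow>
     (\<forall>x y z. ad (ad x y) z = ad x (ad y z)) \<and>
     (\<forall>x y. ad x y = ad y x) \<and>
     (\<forall>x. ad x x = x) \<and>
     (\<forall>x y z. mu (mu x y) z = mu x (mu y z)) \<and>
     (\<forall>x y z. mu x (ad y z) = ad (mu x y) (mu x z)) \<and>
     (\<forall>x y z. mu (ad x y) z = ad (mu x z) (mu y z))"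

definition S4_carrier :: "nat set" where "S4_carrier = {1,2,3,4}"

definition S4_add :: "nat \<Rightarrow> nat \<Rightarrow> nat" where
  "S4_add a b = (if a = b then a else if a = 2 then b else if b = 2 then a else 1)"

definition S4_mul :: "nat \<Rightarrow> nat \<Rightarrow> nat" where
  "S4_mul a b = (if a = 2 \<and> b = 2 then 2
                 else if (a = 2 \<and> b = 4) \<or> (a = 4 \<and> b = 2) then 4 else 1)"

text \<open>Membership in the variety V(S_(4,398)) generated by S_(4,398):
  by Birkhoff's HSP theorem, V(S) is the class of algebras satisfying every
  identity that holds in S.\<close>
definition in_V_S4 :: "('a \<Rightarrow> 'a \<Rightarrow> 'a) \<Rightarrow> ('a \<Rightarrow> 'a \<Rightarrow> 'a) \<Rightarrow> bool" where
  "in_V_S4 ad mu \<longleftrightarrow>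
     (\<forall>u v. holds_in S4_carrier S4_add S4_mul u v \<longrightarrow> holds_in UNIV ad mu u v)"

end

theory Submission
  imports Defs
begin

lemma S4_ai: "ai_semiring S4_add S4_mul"
  unfolding ai_semiring_def S4_add_def S4_mul_def by auto
lemma S4_id: "(\<forall>x y. S4_mul x y = S4_mul y x) \<and>
           (\<forall>x y. S4_mul x y = S4_add (S4_mul x y) x) \<and>
           (\<forall>x y z. S4_add (S4_mul x x) (S4_mul y z) = S4_mul (S4_mul (S4_mul x x) y) z) \<and>
           (\<forall>x y z. S4_mul (S4_mul x y) z = S4_add (S4_add (S4_mul x y) (S4_mul y z)) (S4_mul x z))"
  unfolding S4_add_def S4_mul_def by auto

datatype mon = L nat | P nat nat

definition mk :: "nat \<Rightarrow> nat \<Rightarrow> mon" where "mk a b = P (min a b) (max a b)"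

fun mul :: "mon \<Rightarrow> mon \<Rightarrow> mon set" where
  "mul (L a) (L b) = {mk a b}"
| "mul (L a) (P b c) = {mk a b, mk b c, mk a c}"
| "mul (P a b) (L c) = {mk a b, mk b c, mk a c}"
| "mul (P a b) (P c d) = {mk a b, mk a c, mk a d, mk b c, mk b d, mk c d}"

fun mons :: "trm \<Rightarrow> mon set" where
  "mons (Var i) = {L i}"
| "mons (Plus s t) = mons s \<union> mons t"
| "mons (Times s t) = (\<Union>m1\<in>mons s. \<Union>m2\<in>mons t. mul m1 m2)"

fun emon :: "('a \<Rightarrow> 'a \<Rightarrow> 'a) \<Rightarrow> (nat \<Rightarrow> 'a) \<Rightarrow> mon \<Rightarrow> 'a" where
  "emon mu \<rho> (L a) = \<rho> a"
| "emon mu \<rho> (P a b) = mu (\<rho> a) (\<rho> b)"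

lemma mul_fin: "finite (mul m1 m2)" "mul m1 m2 \<noteq> {}"
  by (cases m1; cases m2; simp)+

lemma mons_fin: "finite (mons t)" "mons t \<noteq> {}"
  by (induction t) (auto simp: mul_fin)

locale M =
  fixes ad mu :: "'a \<Rightarrow> 'a \<Rightarrow> 'a"
  assumes ai: "ai_semiring ad mu"
    and comm: "\<And>x y. mu x y = mu y x"
    and IA: "\<And>x y. mu x y = ad (mu x y) x"
    and IB: "\<And>x y z. ad (mu x x) (mu y z) = mu (mu (mu x x) y) z"
    and IC: "\<And>x y z. mu (mu x y) z = ad (ad (mu x y) (mu y z)) (mu x z)"
begin

lemma massoc: "mu (mu x y) z = mu x (mu y z)" using ai unfolding ai_semiring_def by blast
lemma ldist: "mu x (ad y z) = ad (mu x y) (mu x z)" using ai unfolding ai_semiring_def by blast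
lemma rdist: "mu (ad x y) z = ad (mu x z) (mu y z)" using ai unfolding ai_semiring_def by blast

sublocale sl: semilattice_set ad
  apply unfold_locales using ai unfolding ai_semiring_def by blast+

definition esum :: "(nat \<Rightarrow> 'a) \<Rightarrow> mon set \<Rightarrow> 'a" where
  "esum \<rho> A = sl.F (emon mu \<rho> ` A)"

lemmas aci = sl.assoc sl.commute sl.left_commute sl.idem sl.left_idem

lemma emon_mk: "emon mu \<rho> (mk a b) = mu (\<rho> a) (\<rho> b)"
  by (simp add: mk_def min_def max_def comm)

lemma four: "mu (mu a b) (mu c d) =
  ad (mu a b) (ad (mu a c) (ad (mu a d) (ad (mu b c) (ad (mu b d) (mu c d)))))"
proof -
  have "mu (mu a b) (mu c d) = ad (ad (mu a b) (mu b (mu c d))) (mu a (mu c d))"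
    using IC[of a b "mu c d"] .
  also have "mu b (mu c d) = ad (ad (mu b c) (mu c d)) (mu b d)"
    using IC[of b c d] by (simp add: massoc)
  also have "mu a (mu c d) = ad (ad (mu a c) (mu c d)) (mu a d)"
    using IC[of a c d] by (simp add: massoc)
  finally show ?thesis by (simp add: aci)
qed

lemma absB: "ad (ad (mu x x) (mu y z)) (mu x y) = ad (mu x x) (mu y z)"
proof -
  have "ad (mu x x) (mu y z) = mu (mu x x) (mu y z)" using IB[of x y z] by (simp add: massoc)
  also have "\<dots> = ad (mu x x) (ad (mu x y) (ad (mu x z) (ad (mu x y) (ad (mu x z) (mu y z)))))"
    by (rule four)
  finally have e: "ad (mu x x) (mu y z) = ad (mu x x) (ad (mu x y) (ad (mu x z) (ad (mu x y) (ad (mu x z) (mu y z)))))" .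
  show ?thesis by (subst e)+ (simp add: aci)
qed

lemma mul_lemma: "mu (emon mu \<rho> m1) (emon mu \<rho> m2) = esum \<rho> (mul m1 m2)"
proof (cases m1; cases m2)
  fix a b assume "m1 = L a" "m2 = L b" then show ?thesis by (simp add: esum_def emon_mk)
next
  fix a b c assume "m1 = L a" "m2 = P b c" then show ?thesis
    using IC[of "\<rho> a" "\<rho> b" "\<rho> c"] by (simp add: esum_def emon_mk massoc aci)
next
  fix a b c assume "m1 = P a b" "m2 = L c" then show ?thesis
    using IC[of "\<rho> a" "\<rho> b" "\<rho> c"] by (simp add: esum_def emon_mk massoc aci)
next
  fix a b c d assume "m1 = P a b" "m2 = P c d" then show ?thesis
    using four[of "\<rho> a" "\<rho> b" "\<rho> c" "\<rho> d"] by (simp add: esum_def emon_mk aci)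
qed

lemma esum_Un: "finite A \<Longrightarrow> A \<noteq> {} \<Longrightarrow> finite B \<Longrightarrow> B \<noteq> {} \<Longrightarrow>
   esum \<rho> (A \<union> B) = ad (esum \<rho> A) (esum \<rho> B)"
  unfolding esum_def image_Un by (rule sl.union) auto

lemma esum_UN: "finite I \<Longrightarrow> I \<noteq> {} \<Longrightarrow> (\<And>i. i \<in> I \<Longrightarrow> finite (G i) \<and> G i \<noteq> {}) \<Longrightarrow>
   sl.F ((\<lambda>i. esum \<rho> (G i)) ` I) = esum \<rho> (\<Union>i\<in>I. G i)"
proof (induction I rule: finite_ne_induct)
  case (singleton x) then show ?case by simp
next
  case (insert x F)
  have "sl.F ((\<lambda>i. esum \<rho> (G i)) ` insert x F) = ad (esum \<rho> (G x)) (sl.F ((\<lambda>i. esum \<rho> (G i)) ` F))"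
    using insert by simp
  also have "\<dots> = ad (esum \<rho> (G x)) (esum \<rho> (\<Union>i\<in>F. G i))" using insert by simp
  also have "\<dots> = esum \<rho> (G x \<union> (\<Union>i\<in>F. G i))"
    using insert by (subst esum_Un) auto
  finally show ?case by simp
qed

lemma distr: "finite A \<Longrightarrow> A \<noteq> {} \<Longrightarrow> mu (sl.F A) y = sl.F ((\<lambda>x. mu x y) ` A)"
  by (rule sl.hom_commute) (auto simp: rdist)
lemma distl: "finite A \<Longrightarrow> A \<noteq> {} \<Longrightarrow> mu y (sl.F A) = sl.F ((\<lambda>x. mu y x) ` A)"
  by (rule sl.hom_commute) (auto simp: ldist)

lemma eval_mons: "eval ad mu \<rho> t = esum \<rho> (mons t)"
proof (induction t)
  case (Var i) then show ?case by (simp add: esum_def)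
next
  case (Plus s t) then show ?case using mons_fin by (simp add: esum_Un)
next
  case (Times s t)
  let ?A = "mons s" and ?B = "mons t"
  have "eval ad mu \<rho> (Times s t) = mu (esum \<rho> ?A) (esum \<rho> ?B)" using Times by simp
  also have "\<dots> = sl.F ((\<lambda>m1. mu (emon mu \<rho> m1) (esum \<rho> ?B)) ` ?A)"
    unfolding esum_def[of _ ?A] using mons_fin by (simp add: distr image_image)
  also have "\<dots> = sl.F ((\<lambda>m1. sl.F ((\<lambda>m2. esum \<rho> (mul m1 m2)) ` ?B)) ` ?A)"
    unfolding esum_def[of _ ?B] using mons_fin by (simp add: distl image_image mul_lemma)
  also have "\<dots> = sl.F ((\<lambda>m1. esum \<rho> (\<Union>m2\<in>?B. mul m1 m2)) ` ?A)"
    using mons_fin mul_fin by (simp add: esum_UN)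
  also have "\<dots> = esum \<rho> (mons (Times s t))"
    using mons_fin mul_fin by (subst esum_UN) auto
  finally show ?case .
qed

end

definition Dv :: "mon set \<Rightarrow> nat set" where "Dv A = {x. \<exists>y. P x y \<in> A \<or> P y x \<in> A}"
definition Qv :: "mon set \<Rightarrow> nat set" where "Qv A = {x. P x x \<in> A}"
definition sat :: "mon set \<Rightarrow> mon set" where
  "sat A = A \<union> L ` Dv A \<union> (\<lambda>(x,y). mk x y) ` (Qv A \<times> Dv A)"
definition nrm :: "mon set \<Rightarrow> bool" where "nrm A \<longleftrightarrow> (\<forall>a b. P a b \<in> A \<longrightarrow> a \<le> b)"

fun mvars :: "mon \<Rightarrow> nat set" where
  "mvars (L a) = {a}" | "mvars (P a b) = {a, b}"

lemma mvars_fin: "finite (mvars m)" by (cases m) auto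

lemma Dv_sub: "Dv A \<subseteq> (\<Union>m\<in>A. mvars m)"
  unfolding Dv_def by force

lemma Qv_sub: "Qv A \<subseteq> Dv A" unfolding Qv_def Dv_def by auto

lemma sat_fin: "finite A \<Longrightarrow> finite (sat A)"
proof -
  assume f: "finite A"
  have "finite (\<Union>m\<in>A. mvars m)" using f by (intro finite_UN_I) (auto simp: mvars_fin)
  then have fD: "finite (Dv A)" using Dv_sub finite_subset by blast
  then have "finite (Qv A)" using Qv_sub finite_subset by blast
  then show ?thesis using f fD unfolding sat_def by auto
qed

lemma nrm_mul: "m \<in> mul m1 m2 \<Longrightarrow> (\<exists>a b. m = P a b \<and> a \<le> b)"
  by (cases m1; cases m2) (auto simp: mk_def)

lemma nrm_mons: "nrm (mons t)"
  unfolding nrm_def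
proof (induction t)
  case (Times s t) then show ?case using nrm_mul by fastforce
qed auto

lemma nrmD: "nrm A \<Longrightarrow> P a b \<in> A \<Longrightarrow> a \<le> b" unfolding nrm_def by blast

lemma memL: "L x \<in> sat A \<longleftrightarrow> L x \<in> A \<or> x \<in> Dv A"
  unfolding sat_def by (auto simp: mk_def)

lemma memP: "nrm A \<Longrightarrow> a \<le> b \<Longrightarrow>
  (P a b \<in> sat A \<longleftrightarrow> P a b \<in> A \<or> (a \<in> Qv A \<and> b \<in> Dv A) \<or> (b \<in> Qv A \<and> a \<in> Dv A))"
proof -
  assume n: "nrm A" and ab: "a \<le> b"
  have "P a b \<in> (\<lambda>(x,y). mk x y) ` (Qv A \<times> Dv A) \<longleftrightarrow> (a \<in> Qv A \<and> b \<in> Dv A) \<or> (b \<in> Qv A \<and> a \<in> Dv A)"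
  proof
    assume "P a b \<in> (\<lambda>(x,y). mk x y) ` (Qv A \<times> Dv A)"
    then obtain x y where "x \<in> Qv A" "y \<in> Dv A" "P a b = mk x y" by auto
    then show "(a \<in> Qv A \<and> b \<in> Dv A) \<or> (b \<in> Qv A \<and> a \<in> Dv A)"
      using ab by (auto simp: mk_def min_def max_def split: if_splits)
  next
    assume "(a \<in> Qv A \<and> b \<in> Dv A) \<or> (b \<in> Qv A \<and> a \<in> Dv A)"
    moreover have "P a b = mk a b" "P a b = mk b a" using ab by (auto simp: mk_def)
    ultimately show "P a b \<in> (\<lambda>(x,y). mk x y) ` (Qv A \<times> Dv A)"
      by (metis (no_types, lifting) SigmaI case_prod_conv rev_image_eqI)
  qed
  then show ?thesis unfolding sat_def by auto
qed

lemma memP2: "nrm A \<Longrightarrow> b < a \<Longrightarrow> P a b \<notin> sat A"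
proof
  assume n: "nrm A" and ba: "b < a" and "P a b \<in> sat A"
  then have "P a b \<in> A \<or> P a b \<in> (\<lambda>(x,y). mk x y) ` (Qv A \<times> Dv A)" unfolding sat_def by auto
  moreover have "P a b \<notin> A" using n ba nrmD leD by blast
  ultimately show False using ba by (auto simp: mk_def min_def max_def split: if_splits)
qed

lemma sat_eq:
  assumes nA: "nrm A" and nB: "nrm B"
    and c: "{x. L x \<in> A} \<union> Dv A = {x. L x \<in> B} \<union> Dv B"
    and D: "Dv A = Dv B" and Q: "Qv A = Qv B"
    and E: "\<And>x y. x \<notin> Qv A \<Longrightarrow> y \<notin> Qv A \<Longrightarrow> x \<noteq> y \<Longrightarrow>
              (P x y \<in> A \<or> P y x \<in> A) \<longleftrightarrow> (P x y \<in> B \<or> P y x \<in> B)"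
  shows "sat A = sat B"
proof (rule set_eqI)
  fix m show "m \<in> sat A \<longleftrightarrow> m \<in> sat B"
  proof (cases m)
    case (L x) then show ?thesis using c D memL by blast
  next
    case (P a b)
    show ?thesis
    proof (cases "a \<le> b")
      case False then show ?thesis using P memP2 nA nB by auto
    next
      case True
      have dA: "P a b \<in> A \<Longrightarrow> a \<in> Dv A \<and> b \<in> Dv A" by (auto simp: Dv_def)
      have dB: "P a b \<in> B \<Longrightarrow> a \<in> Dv B \<and> b \<in> Dv B" by (auto simp: Dv_def)
      show ?thesis
      proof (cases "a \<in> Qv A \<or> b \<in> Qv A")
        case True
        then show ?thesis using P memP[OF nA \<open>a \<le> b\<close>] memP[OF nB \<open>a \<le> b\<close>] dA dB D Q by auto
      next
        case nq: False
        show ?thesis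
        proof (cases "a = b")
          case True then show ?thesis using nq P memP[OF nA \<open>a \<le> b\<close>] memP[OF nB \<open>a \<le> b\<close>] Q
            by (auto simp: Qv_def)
        next
          case False
          then have "b \<noteq> a" by auto
          have "P b a \<notin> A" "P b a \<notin> B" using nA nB \<open>a \<le> b\<close> False nrmD[of A b a] nrmD[of B b a] by auto
          then show ?thesis using nq P memP[OF nA \<open>a \<le> b\<close>] memP[OF nB \<open>a \<le> b\<close>] Q E[of a b] False
            by auto
        qed
      qed
    qed
  qed
qed

context M begin

lemma absorb_set: assumes "finite B" "finite A" "A \<noteq> {}"
  "\<And>m. m \<in> B \<Longrightarrow> ad (esum \<rho> A) (emon mu \<rho> m) = esum \<rho> A" shows "esum \<rho> (A \<union> B) = esum \<rho> A"
  using assms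
proof (induction B rule: finite_induct)
  case empty then show ?case by simp
next
  case (insert b B)
  have "esum \<rho> (A \<union> insert b B) = ad (emon mu \<rho> b) (esum \<rho> (A \<union> B))"
    using insert.prems insert.hyps by (simp add: esum_def)
  also have "\<dots> = ad (emon mu \<rho> b) (esum \<rho> A)" using insert by simp
  also have "\<dots> = esum \<rho> A" using insert.prems(3)[of b] by (simp add: sl.commute)
  finally show ?case .
qed

lemma absorb2: "ad q E = E \<Longrightarrow> ad q r = q \<Longrightarrow> ad E r = E"
  by (metis sl.assoc sl.commute)

lemma in_esum: "finite A \<Longrightarrow> m \<in> A \<Longrightarrow> ad (emon mu \<rho> m) (esum \<rho> A) = esum \<rho> A"
  unfolding esum_def by (rule sl.in_idem) auto

lemma esum_sat: assumes f: "finite A" and ne: "A \<noteq> {}" shows "esum \<rho> (sat A) = esum \<rho> A"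
proof -
  have sA: "sat A = A \<union> (L ` Dv A \<union> (\<lambda>(x,y). mk x y) ` (Qv A \<times> Dv A))" unfolding sat_def by auto
  have fB: "finite (L ` Dv A \<union> (\<lambda>(x,y). mk x y) ` (Qv A \<times> Dv A))"
    using sat_fin[OF f] unfolding sat_def by auto
  have abs: "ad (esum \<rho> A) (emon mu \<rho> m) = esum \<rho> A"
    if m: "m \<in> L ` Dv A \<union> (\<lambda>(x,y). mk x y) ` (Qv A \<times> Dv A)" for m
  proof -
    { fix x assume "m = L x" "x \<in> Dv A"
      then obtain y where "P x y \<in> A \<or> P y x \<in> A" unfolding Dv_def by auto
      then obtain q where q: "q \<in> A" "emon mu \<rho> q = mu (\<rho> x) (\<rho> y)" by (auto simp: comm)
      have i: "ad (mu (\<rho> x) (\<rho> y)) (\<rho> x) = mu (\<rho> x) (\<rho> y)" by (rule IA[symmetric])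
      have e: "ad (mu (\<rho> x) (\<rho> y)) (esum \<rho> A) = esum \<rho> A"
        using in_esum[OF f q(1), where \<rho>=\<rho>] q(2) by simp
      have ?thesis using absorb2[OF e i] \<open>m = L x\<close> by simp }
    moreover
    { fix x y assume "m = mk x y" "x \<in> Qv A" "y \<in> Dv A"
      then obtain z where z: "P y z \<in> A \<or> P z y \<in> A" unfolding Dv_def by auto
      then obtain q where q: "q \<in> A" "emon mu \<rho> q = mu (\<rho> y) (\<rho> z)" by (auto simp: comm)
      have qx: "P x x \<in> A" using \<open>x \<in> Qv A\<close> by (simp add: Qv_def)
      let ?E = "esum \<rho> A"
      have e1: "ad (mu (\<rho> x) (\<rho> x)) ?E = ?E" using in_esum[OF f qx] by simp
      have e2: "ad (mu (\<rho> y) (\<rho> z)) ?E = ?E" using in_esum[OF f q(1), where \<rho>=\<rho>] q(2) by simp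
      have "ad (ad (mu (\<rho> x) (\<rho> x)) (mu (\<rho> y) (\<rho> z))) ?E = ?E"
        using e1 e2 by (simp add: sl.assoc)
      from absorb2[OF this absB] have ?thesis using \<open>m = mk x y\<close> by (simp add: emon_mk) }
    ultimately show ?thesis using m by auto
  qed
  show ?thesis unfolding sA by (rule absorb_set[OF fB f ne abs])
qed

end

interpretation S4: M S4_add S4_mul
  unfolding M_def using S4_ai S4_id by blast

lemma S4_F1: "finite S \<Longrightarrow> 1 \<in> S \<Longrightarrow> S4.sl.F S = 1"
proof -
  assume "finite S" "1 \<in> S"
  then have "S4_add 1 (S4.sl.F S) = S4.sl.F S" by (rule S4.sl.in_idem)
  then show ?thesis by (simp add: S4_add_def split: if_splits)
qed

lemma S4_F2: "finite S \<Longrightarrow> S \<noteq> {} \<Longrightarrow> S \<subseteq> {2, a} \<Longrightarrow> S4.sl.F S \<in> {2, a}"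
proof (induction S rule: finite_ne_induct)
  case (singleton x) then show ?case by simp
next
  case (insert x F)
  have cl: "u \<in> {2, a} \<Longrightarrow> w \<in> {2, a} \<Longrightarrow> S4_add u w \<in> {2, a}" for u w
    by (auto simp: S4_add_def)
  have "S4.sl.F (insert x F) = S4_add x (S4.sl.F F)" using insert.hyps by simp
  then show ?case using cl insert by auto
qed

lemma S4_K: "finite S \<Longrightarrow> S \<noteq> {} \<Longrightarrow> S \<subseteq> {1, 2, a} \<Longrightarrow> a \<noteq> 1 \<Longrightarrow> (S4.sl.F S = 1 \<longleftrightarrow> 1 \<in> S)"
proof -
  assume f: "finite S" "S \<noteq> {}" "S \<subseteq> {1, 2, a}" "a \<noteq> 1"
  show ?thesis
  proof (cases "1 \<in> S")
    case True then show ?thesis using S4_F1 f by auto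
  next
    case False
    then have "S \<subseteq> {2, a}" using f by auto
    then have "S4.sl.F S \<in> {2, a}" using S4_F2 f by auto
    then show ?thesis using False f by auto
  qed
qed

definition one :: "(nat \<Rightarrow> nat) \<Rightarrow> mon set \<Rightarrow> bool" where
  "one \<rho> A \<longleftrightarrow> (\<exists>m\<in>A. emon S4_mul \<rho> m = 1)"

lemma test:
  assumes h: "holds_in S4_carrier S4_add S4_mul u v" and r: "\<And>i. \<rho> i \<in> S4_carrier"
    and vals: "\<And>m. emon S4_mul \<rho> m \<in> {1, 2, a}" and a: "a \<noteq> 1"
  shows "one \<rho> (mons u) \<longleftrightarrow> one \<rho> (mons v)"
proof -
  have "eval S4_add S4_mul \<rho> u = eval S4_add S4_mul \<rho> v" using h r unfolding holds_in_def by blast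
  then have e: "S4.sl.F (emon S4_mul \<rho> ` mons u) = S4.sl.F (emon S4_mul \<rho> ` mons v)"
    by (simp add: S4.eval_mons S4.esum_def)
  have "S4.sl.F (emon S4_mul \<rho> ` mons t) = 1 \<longleftrightarrow> one \<rho> (mons t)" for t
  proof -
    have sub: "emon S4_mul \<rho> ` mons t \<subseteq> {1, 2, a}" using vals by auto
    have "S4.sl.F (emon S4_mul \<rho> ` mons t) = 1 \<longleftrightarrow> 1 \<in> emon S4_mul \<rho> ` mons t"
      using S4_K[OF _ _ sub a] mons_fin[of t] by auto
    moreover have "1 \<in> emon S4_mul \<rho> ` mons t \<longleftrightarrow> (\<exists>m\<in>mons t. emon S4_mul \<rho> m = 1)"
      by (simp only: image_iff) (metis (mono_tags))
    ultimately show ?thesis unfolding one_def by simp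
  qed
  then show ?thesis using e by metis
qed

definition r1 :: "nat \<Rightarrow> nat \<Rightarrow> nat" where "r1 x = (\<lambda>i. if i = x then 1 else 2)"
definition r3 :: "nat \<Rightarrow> nat \<Rightarrow> nat" where "r3 x = (\<lambda>i. if i = x then 3 else 2)"
definition r4 :: "nat \<Rightarrow> nat \<Rightarrow> nat" where "r4 x = (\<lambda>i. if i = x then 4 else 2)"
definition r44 :: "nat \<Rightarrow> nat \<Rightarrow> nat \<Rightarrow> nat" where "r44 x y = (\<lambda>i. if i = x \<or> i = y then 4 else 2)"

lemma r_car: "r1 x i \<in> S4_carrier" "r3 x i \<in> S4_carrier" "r4 x i \<in> S4_carrier" "r44 x y i \<in> S4_carrier"
  by (auto simp: r1_def r3_def r4_def r44_def S4_carrier_def)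

lemma r1_m: "emon S4_mul (r1 x) m \<in> {1, 2, 2}" "emon S4_mul (r1 x) m = 1 \<longleftrightarrow> x \<in> mvars m"
  by (cases m; auto simp: r1_def S4_mul_def)+
lemma r3_m: "emon S4_mul (r3 x) m \<in> {1, 2, 3}"
  "emon S4_mul (r3 x) m = 1 \<longleftrightarrow> (\<exists>a b. m = P a b \<and> (a = x \<or> b = x))"
  by (cases m; auto simp: r3_def S4_mul_def)+
lemma r4_m: "emon S4_mul (r4 x) m \<in> {1, 2, 4}"
  "emon S4_mul (r4 x) m = 1 \<longleftrightarrow> m = P x x"
  by (cases m; auto simp: r4_def S4_mul_def)+
lemma r44_m: "emon S4_mul (r44 x y) m \<in> {1, 2, 4}"
  "emon S4_mul (r44 x y) m = 1 \<longleftrightarrow> (\<exists>a b. m = P a b \<and> (a = x \<or> a = y) \<and> (b = x \<or> b = y))"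
  by (cases m; auto simp: r44_def S4_mul_def)+

lemma vars_eq: "{x. L x \<in> A} \<union> Dv A = {x. \<exists>m\<in>A. x \<in> mvars m}"
proof (rule set_eqI, rule iffI)
  fix x assume "x \<in> {x. L x \<in> A} \<union> Dv A"
  then show "x \<in> {x. \<exists>m\<in>A. x \<in> mvars m}" unfolding Dv_def by force
next
  fix x assume "x \<in> {x. \<exists>m\<in>A. x \<in> mvars m}"
  then obtain m where "m \<in> A" "x \<in> mvars m" by auto
  then show "x \<in> {x. L x \<in> A} \<union> Dv A" by (cases m) (auto simp: Dv_def)
qed

lemma sat_S4:
  assumes h: "holds_in S4_carrier S4_add S4_mul u v"
  shows "sat (mons u) = sat (mons v)"
proof -
  let ?A = "mons u" and ?B = "mons v"
  have t1: "one (r1 x) ?A \<longleftrightarrow> one (r1 x) ?B" for x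
    by (rule test[OF h r_car(1) r1_m(1)]) simp
  have t3: "one (r3 x) ?A \<longleftrightarrow> one (r3 x) ?B" for x
    by (rule test[OF h r_car(2) r3_m(1)]) simp
  have t4: "one (r4 x) ?A \<longleftrightarrow> one (r4 x) ?B" for x
    by (rule test[OF h r_car(3) r4_m(1)]) simp
  have t44: "one (r44 x y) ?A \<longleftrightarrow> one (r44 x y) ?B" for x y
    by (rule test[OF h r_car(4) r44_m(1)]) simp
  have c1: "one (r1 x) A \<longleftrightarrow> x \<in> {x. L x \<in> A} \<union> Dv A" for x A
    unfolding vars_eq one_def r1_m(2) by blast
  have c3: "one (r3 x) A \<longleftrightarrow> x \<in> Dv A" for x A
    unfolding Dv_def one_def r3_m(2) by blast
  have c4: "one (r4 x) A \<longleftrightarrow> x \<in> Qv A" for x A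
    unfolding Qv_def one_def r4_m(2) by blast
  have c44: "one (r44 x y) A \<longleftrightarrow> (P x y \<in> A \<or> P y x \<in> A)"
    if "x \<notin> Qv A" "y \<notin> Qv A" for x y A
    using that unfolding Qv_def one_def r44_m(2) by blast
  have D: "Dv ?A = Dv ?B" using t3 c3 by blast
  have Q: "Qv ?A = Qv ?B" using t4 c4 by blast
  show ?thesis
  proof (rule sat_eq[OF nrm_mons nrm_mons])
    show "{x. L x \<in> ?A} \<union> Dv ?A = {x. L x \<in> ?B} \<union> Dv ?B" using t1 c1 by blast
    show "Dv ?A = Dv ?B" by (rule D)
    show "Qv ?A = Qv ?B" by (rule Q)
    show "(P x y \<in> ?A \<or> P y x \<in> ?A) \<longleftrightarrow> (P x y \<in> ?B \<or> P y x \<in> ?B)"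
      if "x \<notin> Qv ?A" "y \<notin> Qv ?A" "x \<noteq> y" for x y
      using c44[of x ?A y] c44[of x ?B y] that Q t44[of x y] by auto
  qed
qed


lemma useV: "in_V_S4 ad mu \<Longrightarrow> (\<And>\<sigma>. eval S4_add S4_mul \<sigma> u = eval S4_add S4_mul \<sigma> v)
  \<Longrightarrow> eval ad mu \<rho> u = eval ad mu \<rho> v"
  unfolding in_V_S4_def holds_in_def by blast

lemmas S4a = S4_ai[unfolded ai_semiring_def]

theorem proposition6p13:
  fixes ad mu :: "'a \<Rightarrow> 'a \<Rightarrow> 'a"
  shows "in_V_S4 ad mu \<longleftrightarrow>
           ai_semiring ad mu \<and>
           (\<forall>x y. mu x y = mu y x) \<and>
           (\<forall>x y. mu x y = ad (mu x y) x) \<and>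
           (\<forall>x y z. ad (mu x x) (mu y z) = mu (mu (mu x x) y) z) \<and>
           (\<forall>x y z. mu (mu x y) z = ad (ad (mu x y) (mu y z)) (mu x z))"
proof
  assume V: "in_V_S4 ad mu"
  define r3 :: "'a \<Rightarrow> 'a \<Rightarrow> 'a \<Rightarrow> nat \<Rightarrow> 'a" where "r3 x y z = (\<lambda>i. if i = 0 then x else if i = 1 then y else z)" for x y z
  have ax: "eval ad mu (r3 x y z) u = eval ad mu (r3 x y z) v"
    if "\<And>\<sigma>. eval S4_add S4_mul \<sigma> u = eval S4_add S4_mul \<sigma> v" for u v x y z
    using useV[OF V] that by blast
  have f0: "ad (ad x y) z = ad x (ad y z)" for x y z
  proof -
    have "\<And>\<sigma>. eval S4_add S4_mul \<sigma> (Plus (Plus (Var 0) (Var 1)) (Var 2)) = eval S4_add S4_mul \<sigma> (Plus (Var 0) (Plus (Var 1) (Var 2)))"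
      by (simp only: eval.simps) (rule S4.sl.assoc)
    from ax[OF this, of x y z] show ?thesis by (simp add: r3_def)
  qed
  have f1: "ad x y = ad y x" for x y
  proof -
    have "\<And>\<sigma>. eval S4_add S4_mul \<sigma> (Plus (Var 0) (Var 1)) = eval S4_add S4_mul \<sigma> (Plus (Var 1) (Var 0))"
      by (simp only: eval.simps) (rule S4.sl.commute)
    from ax[OF this, of x y z] show ?thesis by (simp add: r3_def)
  qed
  have f2: "ad x x = x" for x
  proof -
    have "\<And>\<sigma>. eval S4_add S4_mul \<sigma> (Plus (Var 0) (Var 0)) = eval S4_add S4_mul \<sigma> (Var 0)"
      by (simp only: eval.simps) (rule S4.sl.idem)
    from ax[OF this, of x y z] show ?thesis by (simp add: r3_def)
  qed
  have f3: "mu (mu x y) z = mu x (mu y z)" for x y z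
  proof -
    have "\<And>\<sigma>. eval S4_add S4_mul \<sigma> (Times (Times (Var 0) (Var 1)) (Var 2)) = eval S4_add S4_mul \<sigma> (Times (Var 0) (Times (Var 1) (Var 2)))"
      by (simp only: eval.simps) (rule S4.massoc)
    from ax[OF this, of x y z] show ?thesis by (simp add: r3_def)
  qed
  have f4: "mu x (ad y z) = ad (mu x y) (mu x z)" for x y z
  proof -
    have "\<And>\<sigma>. eval S4_add S4_mul \<sigma> (Times (Var 0) (Plus (Var 1) (Var 2))) = eval S4_add S4_mul \<sigma> (Plus (Times (Var 0) (Var 1)) (Times (Var 0) (Var 2)))"
      by (simp only: eval.simps) (rule S4.ldist)
    from ax[OF this, of x y z] show ?thesis by (simp add: r3_def)
  qed
  have f5: "mu (ad x y) z = ad (mu x z) (mu y z)" for x y z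
  proof -
    have "\<And>\<sigma>. eval S4_add S4_mul \<sigma> (Times (Plus (Var 0) (Var 1)) (Var 2)) = eval S4_add S4_mul \<sigma> (Plus (Times (Var 0) (Var 2)) (Times (Var 1) (Var 2)))"
      by (simp only: eval.simps) (rule S4.rdist)
    from ax[OF this, of x y z] show ?thesis by (simp add: r3_def)
  qed
  have f6: "mu x y = mu y x" for x y
  proof -
    have "\<And>\<sigma>. eval S4_add S4_mul \<sigma> (Times (Var 0) (Var 1)) = eval S4_add S4_mul \<sigma> (Times (Var 1) (Var 0))"
      by (simp only: eval.simps) (rule S4.comm)
    from ax[OF this, of x y z] show ?thesis by (simp add: r3_def)
  qed
  have f7: "mu x y = ad (mu x y) x" for x y
  proof -
    have "\<And>\<sigma>. eval S4_add S4_mul \<sigma> (Times (Var 0) (Var 1)) = eval S4_add S4_mul \<sigma> (Plus (Times (Var 0) (Var 1)) (Var 0))"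
      by (simp only: eval.simps) (rule S4.IA)
    from ax[OF this, of x y z] show ?thesis by (simp add: r3_def)
  qed
  have f8: "ad (mu x x) (mu y z) = mu (mu (mu x x) y) z" for x y z
  proof -
    have "\<And>\<sigma>. eval S4_add S4_mul \<sigma> (Plus (Times (Var 0) (Var 0)) (Times (Var 1) (Var 2))) = eval S4_add S4_mul \<sigma> (Times (Times (Times (Var 0) (Var 0)) (Var 1)) (Var 2))"
      by (simp only: eval.simps) (rule S4.IB)
    from ax[OF this, of x y z] show ?thesis by (simp add: r3_def)
  qed
  have f9: "mu (mu x y) z = ad (ad (mu x y) (mu y z)) (mu x z)" for x y z
  proof -
    have "\<And>\<sigma>. eval S4_add S4_mul \<sigma> (Times (Times (Var 0) (Var 1)) (Var 2)) = eval S4_add S4_mul \<sigma> (Plus (Plus (Times (Var 0) (Var 1)) (Times (Var 1) (Var 2))) (Times (Var 0) (Var 2)))"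
      by (simp only: eval.simps) (rule S4.IC)
    from ax[OF this, of x y z] show ?thesis by (simp add: r3_def)
  qed
  show "ai_semiring ad mu \<and>
           (\<forall>x y. mu x y = mu y x) \<and>
           (\<forall>x y. mu x y = ad (mu x y) x) \<and>
           (\<forall>x y z. ad (mu x x) (mu y z) = mu (mu (mu x x) y) z) \<and>
           (\<forall>x y z. mu (mu x y) z = ad (ad (mu x y) (mu y z)) (mu x z))"
    unfolding ai_semiring_def using f0 f1 f2 f3 f4 f5 f6 f7 f8 f9 by blast
next
  assume H: "ai_semiring ad mu \<and>
           (\<forall>x y. mu x y = mu y x) \<and>
           (\<forall>x y. mu x y = ad (mu x y) x) \<and>
           (\<forall>x y z. ad (mu x x) (mu y z) = mu (mu (mu x x) y) z) \<and>
           (\<forall>x y z. mu (mu x y) z = ad (ad (mu x y) (mu y z)) (mu x z))"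
  interpret M ad mu using H unfolding M_def by blast
  show "in_V_S4 ad mu" unfolding in_V_S4_def
  proof (intro allI impI)
    fix u v assume h: "holds_in S4_carrier S4_add S4_mul u v"
    show "holds_in UNIV ad mu u v" unfolding holds_in_def
    proof (intro allI impI)
      fix \<rho> :: "nat \<Rightarrow> 'a"
      have "eval ad mu \<rho> u = esum \<rho> (sat (mons u))" using eval_mons esum_sat mons_fin by simp
      also have "\<dots> = esum \<rho> (sat (mons v))" using sat_S4[OF h] by simp
      also have "\<dots> = eval ad mu \<rho> v" using eval_mons esum_sat mons_fin by simp
      finally show "eval ad mu \<rho> u = eval ad mu \<rho> v" .
    qed
  qed
qed

end
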